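(* Let $(Q,P)$ be a weakly quasi-lattice ordered group and let $\Lambda$ be a $P$-graph with $\mathrm{FA}(\Lambda)\neq\emptyset$. For any $g\in\mathcal{X}(\Lambda)\times Q\times\mathcal{X}(\Lambda)$, the following are equivalent: (1) $g\in\mathcal{G}(\Lambda)$; (2) $g=(\mu\cdot x,\ d(\mu)d(\nu)^{-1},\ \nu\cdot x)$ for some $x\in\mathcal{X}(\Lambda)$ and $\mu,\nu\in\Lambda$ with $s(\mu)=s(\nu)=r(x)$.
   Context: $(Q,P)$ weakly quasi-lattice ordered: $Q$ a discrete group, $P\subseteq Q$ a subsemigroup containing the identity $e$ with $P\cap P^{-1}=\{e\}$, and, with $p\le r$ meaning $pq=r$ for some $q\in P$, any two elements of $P$ with a common upper bound have a least common upper bound. A $P$-graph is a countable small category $\Lambda$ (identities $\Lambda^{(0)}$, range/source $r,s$) with a functor $d:\Lambda\to P$ with unique factorisation (if $d(\lambda)=pq$ there are unique $\mu,\nu$ with $\lambda=\mu\nu$, $d(\mu)=p$, $d(\nu)=q$). Write $\Lambda^m=d^{-1}(m)$, $\lambda\Lambda=\{\lambda\mu: s(\lambda)=r(\mu)\}$, $\mu\preceq\lambda$ iff $\lambda\in\mu\Lambda$. $\mathrm{FA}(\Lambda)$ is the set of $\lambda$ such that for all $\mu\in\lambda\Lambda,\nu\in\Lambda$ there is finite $J\subseteq\Lambda$ with $\mu\Lambda\cap\nu\Lambda=\bigcup_{\kappa\in J}\kappa\Lambda$. A filter is a nonempty hereditary and directed subset of $\Lambda$ (w.r.t. $\preceq$);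 each filter $x$ contains a unique element $r(x)\in\Lambda^{(0)}$, and $d|_x$ is injective. For a filter $x$ with $r(x)=s(\mu)$, $\mu\cdot x=\{\zeta\in\Lambda: \zeta\preceq\mu\gamma\text{ for some }\gamma\in x\}$ (a filter). Path space $\mathcal{X}(\Lambda)=\{x\text{ filter}: x\cap\mathrm{FA}(\Lambda)\neq\emptyset\}$. For $x\in\mathcal{X}(\Lambda)$, $m\in P$ with $x\cap\Lambda^m\neq\emptyset$ (write $x\in\mathrm{dom}(m)$), $x(0,m)$ is the unique element of $x\cap\Lambda^m$ and $x\cdot m=\{\mu: x(0,m)\mu\in x\}$. The path groupoid $\mathcal{G}(\Lambda)$ is the set of $(x,q,y)\in\mathcal{X}(\Lambda)\times Q\times\mathcal{X}(\Lambda)$ for which there are $m,n\in P$ with $q=mn^{-1}$, $x\in\mathrm{dom}(m)$, $y\in\mathrm{dom}(n)$, $x\cdot m=y\cdot n$. *)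

theory Defs
  imports "HOL-Algebra.Group" "HOL-Library.Countable_Set"
begin

text \<open>The group Q is a HOL-Algebra group (discreteness is irrelevant algebraically);
  P is a subset of its carrier.  p \<le> r iff p q = r for some q in P.\<close>

definition qle :: "('q, 'b) monoid_scheme \<Rightarrow> 'q set \<Rightarrow> 'q \<Rightarrow> 'q \<Rightarrow> bool" where
  "qle Q P p r \<longleftrightarrow> (\<exists>q\<in>P. p \<otimes>\<^bsub>Q\<^esub> q = r)"

definition wqlo :: "('q, 'b) monoid_scheme \<Rightarrow> 'q set \<Rightarrow> bool" where
  "wqlo Q P \<longleftrightarrow>
     group Q \<and> P \<subseteq> carrier Q \<and> \<one>\<^bsub>Q\<^esub> \<in> P \<and>
     (\<forall>p\<in>P. \<forall>q\<in>P. p \<otimes>\<^bsub>Q\<^esub> q \<in> P) \<and>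
     P \<inter> (\<lambda>p. inv\<^bsub>Q\<^esub> p) ` P = {\<one>\<^bsub>Q\<^esub>} \<and>
     (\<forall>p\<in>P. \<forall>q\<in>P. (\<exists>r\<in>P. qle Q P p r \<and> qle Q P q r) \<longrightarrow>
        (\<exists>l\<in>P. qle Q P p l \<and> qle Q P q l \<and>
           (\<forall>r\<in>P. qle Q P p r \<and> qle Q P q r \<longrightarrow> qle Q P l r)))"

text \<open>A small category given by its set of morphisms, the set of identities
  (objects), range, source, (partial) composition, and the degree functor.\<close>

record ('m, 'q) pgraph =
  pg_mor :: "'m set"
  pg_obj :: "'m set"
  pg_r   :: "'m \<Rightarrow> 'm"
  pg_s   :: "'m \<Rightarrow> 'm"
  pg_comp :: "'m \<Rightarrow> 'm \<Rightarrow> 'm"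
  pg_d   :: "'m \<Rightarrow> 'q"

definition is_pgraph :: "('q, 'b) monoid_scheme \<Rightarrow> 'q set \<Rightarrow> ('m, 'q) pgraph \<Rightarrow> bool" where
  "is_pgraph Q P L \<longleftrightarrow>
     countable (pg_mor L) \<and>
     pg_obj L \<subseteq> pg_mor L \<and>
     (\<forall>l\<in>pg_mor L. pg_r L l \<in> pg_obj L \<and> pg_s L l \<in> pg_obj L) \<and>
     (\<forall>v\<in>pg_obj L. pg_r L v = v \<and> pg_s L v = v) \<and>
     (\<forall>l\<in>pg_mor L. \<forall>m\<in>pg_mor L. pg_s L l = pg_r L m \<longrightarrow>
        pg_comp L l m \<in> pg_mor L \<and> pg_r L (pg_comp L l m) = pg_r L l \<and>
        pg_s L (pg_comp L l m) = pg_s L m) \<and>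
     (\<forall>l\<in>pg_mor L. \<forall>m\<in>pg_mor L. \<forall>n\<in>pg_mor L.
        pg_s L l = pg_r L m \<longrightarrow> pg_s L m = pg_r L n \<longrightarrow>
        pg_comp L (pg_comp L l m) n = pg_comp L l (pg_comp L m n)) \<and>
     (\<forall>l\<in>pg_mor L. pg_comp L (pg_r L l) l = l \<and> pg_comp L l (pg_s L l) = l) \<and>
     (\<forall>l\<in>pg_mor L. pg_d L l \<in> P) \<and>
     (\<forall>v\<in>pg_obj L. pg_d L v = \<one>\<^bsub>Q\<^esub>) \<and>
     (\<forall>l\<in>pg_mor L. \<forall>m\<in>pg_mor L. pg_s L l = pg_r L m \<longrightarrow>
        pg_d L (pg_comp L l m) = pg_d L l \<otimes>\<^bsub>Q\<^esub> pg_d L m) \<and>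
     (\<forall>l\<in>pg_mor L. \<forall>p\<in>P. \<forall>q\<in>P. pg_d L l = p \<otimes>\<^bsub>Q\<^esub> q \<longrightarrow>
        (\<exists>!(m, n). m \<in> pg_mor L \<and> n \<in> pg_mor L \<and> pg_s L m = pg_r L n \<and>
            pg_comp L m n = l \<and> pg_d L m = p \<and> pg_d L n = q))"

definition ext_set :: "('m, 'q) pgraph \<Rightarrow> 'm \<Rightarrow> 'm set" where
  "ext_set L l = {pg_comp L l m | m. m \<in> pg_mor L \<and> pg_s L l = pg_r L m}"

definition pprec :: "('m, 'q) pgraph \<Rightarrow> 'm \<Rightarrow> 'm \<Rightarrow> bool" where
  "pprec L m l \<longleftrightarrow> m \<in> pg_mor L \<and> l \<in> ext_set L m"

definition FA :: "('m, 'q) pgraph \<Rightarrow> 'm set" where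
  "FA L = {l \<in> pg_mor L. \<forall>m\<in>ext_set L l. \<forall>n\<in>pg_mor L.
      \<exists>J. finite J \<and> J \<subseteq> pg_mor L \<and> ext_set L m \<inter> ext_set L n = (\<Union>k\<in>J. ext_set L k)}"

definition is_filter :: "('m, 'q) pgraph \<Rightarrow> 'm set \<Rightarrow> bool" where
  "is_filter L x \<longleftrightarrow> x \<subseteq> pg_mor L \<and> x \<noteq> {} \<and>
     (\<forall>l\<in>x. \<forall>m. pprec L m l \<longrightarrow> m \<in> x) \<and>
     (\<forall>l\<in>x. \<forall>m\<in>x. \<exists>n\<in>x. pprec L l n \<and> pprec L m n)"

definition filter_r :: "('m, 'q) pgraph \<Rightarrow> 'm set \<Rightarrow> 'm" where
  "filter_r L x = (THE v. v \<in> x \<inter> pg_obj L)"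

definition fmult :: "('m, 'q) pgraph \<Rightarrow> 'm \<Rightarrow> 'm set \<Rightarrow> 'm set" where
  "fmult L m x = {z \<in> pg_mor L. \<exists>g\<in>x. pprec L z (pg_comp L m g)}"

definition path_space :: "('m, 'q) pgraph \<Rightarrow> 'm set set" where
  "path_space L = {x. is_filter L x \<and> x \<inter> FA L \<noteq> {}}"

definition in_dom :: "('m, 'q) pgraph \<Rightarrow> 'm set \<Rightarrow> 'q \<Rightarrow> bool" where
  "in_dom L x p \<longleftrightarrow> (\<exists>l\<in>x. pg_d L l = p)"

definition seg :: "('m, 'q) pgraph \<Rightarrow> 'm set \<Rightarrow> 'q \<Rightarrow> 'm" where
  "seg L x p = (THE l. l \<in> x \<and> pg_d L l = p)"

definition shift :: "('m, 'q) pgraph \<Rightarrow> 'm set \<Rightarrow> 'q \<Rightarrow> 'm set" where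
  "shift L x p = {m \<in> pg_mor L. pg_s L (seg L x p) = pg_r L m \<and> pg_comp L (seg L x p) m \<in> x}"

definition path_groupoid ::
  "('q, 'b) monoid_scheme \<Rightarrow> 'q set \<Rightarrow> ('m, 'q) pgraph \<Rightarrow> ('m set \<times> 'q \<times> 'm set) set" where
  "path_groupoid Q P L = {(x, q, y). x \<in> path_space L \<and> y \<in> path_space L \<and>
     (\<exists>m\<in>P. \<exists>n\<in>P. q = m \<otimes>\<^bsub>Q\<^esub> inv\<^bsub>Q\<^esub> n \<and> in_dom L x m \<and> in_dom L y n \<and>
        shift L x m = shift L y n)}"

end

theory Submission
  imports Defs
begin

locale pgl =
  fixes Q :: "('q, 'b) monoid_scheme" and P :: "'q set" and L :: "('m, 'q) pgraph"
  assumes grp: "group Q" and Pc: "P \<subseteq> carrier Q" and pg: "is_pgraph Q P L"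
begin

lemmas c0 = pg[unfolded is_pgraph_def, THEN conjunct1]
lemmas c1 = pg[unfolded is_pgraph_def, THEN conjunct2, THEN conjunct1]
lemmas c2 = pg[unfolded is_pgraph_def, THEN conjunct2, THEN conjunct2, THEN conjunct1]
lemmas c3 = pg[unfolded is_pgraph_def, THEN conjunct2, THEN conjunct2, THEN conjunct2, THEN conjunct1]
lemmas c4 = pg[unfolded is_pgraph_def, THEN conjunct2, THEN conjunct2, THEN conjunct2, THEN conjunct2, THEN conjunct1]
lemmas c5 = pg[unfolded is_pgraph_def, THEN conjunct2, THEN conjunct2, THEN conjunct2, THEN conjunct2, THEN conjunct2, THEN conjunct1]
lemmas c6 = pg[unfolded is_pgraph_def, THEN conjunct2, THEN conjunct2, THEN conjunct2, THEN conjunct2, THEN conjunct2, THEN conjunct2, THEN conjunct1]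
lemmas c7 = pg[unfolded is_pgraph_def, THEN conjunct2, THEN conjunct2, THEN conjunct2, THEN conjunct2, THEN conjunct2, THEN conjunct2, THEN conjunct2, THEN conjunct1]
lemmas c8 = pg[unfolded is_pgraph_def, THEN conjunct2, THEN conjunct2, THEN conjunct2, THEN conjunct2, THEN conjunct2, THEN conjunct2, THEN conjunct2, THEN conjunct2, THEN conjunct1]
lemmas c9 = pg[unfolded is_pgraph_def, THEN conjunct2, THEN conjunct2, THEN conjunct2, THEN conjunct2, THEN conjunct2, THEN conjunct2, THEN conjunct2, THEN conjunct2, THEN conjunct2, THEN conjunct1]
lemmas c10 = pg[unfolded is_pgraph_def, THEN conjunct2, THEN conjunct2, THEN conjunct2, THEN conjunct2, THEN conjunct2, THEN conjunct2, THEN conjunct2, THEN conjunct2, THEN conjunct2, THEN conjunct2]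

lemma obj_mor: "v \<in> pg_obj L \<Longrightarrow> v \<in> pg_mor L"
  using c1 by blast
lemma r_obj: "l \<in> pg_mor L \<Longrightarrow> pg_r L l \<in> pg_obj L"
  using c2 by blast
lemma s_obj: "l \<in> pg_mor L \<Longrightarrow> pg_s L l \<in> pg_obj L"
  using c2 by blast
lemma obj_r: "v \<in> pg_obj L \<Longrightarrow> pg_r L v = v"
  using c3 by blast
lemma obj_s: "v \<in> pg_obj L \<Longrightarrow> pg_s L v = v"
  using c3 by blast
lemma comp_mor: "l \<in> pg_mor L \<Longrightarrow> m \<in> pg_mor L \<Longrightarrow> pg_s L l = pg_r L m \<Longrightarrow> pg_comp L l m \<in> pg_mor L"
  using c4 by blast
lemma comp_r: "l \<in> pg_mor L \<Longrightarrow> m \<in> pg_mor L \<Longrightarrow> pg_s L l = pg_r L m \<Longrightarrow> pg_r L (pg_comp L l m) = pg_r L l"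
  using c4 by blast
lemma comp_s: "l \<in> pg_mor L \<Longrightarrow> m \<in> pg_mor L \<Longrightarrow> pg_s L l = pg_r L m \<Longrightarrow> pg_s L (pg_comp L l m) = pg_s L m"
  using c4 by blast
lemma assoc: "l \<in> pg_mor L \<Longrightarrow> m \<in> pg_mor L \<Longrightarrow> n \<in> pg_mor L \<Longrightarrow> pg_s L l = pg_r L m \<Longrightarrow> pg_s L m = pg_r L n \<Longrightarrow>
   pg_comp L (pg_comp L l m) n = pg_comp L l (pg_comp L m n)"
  using c5 by blast
lemma unit_l: "l \<in> pg_mor L \<Longrightarrow> pg_comp L (pg_r L l) l = l"
  using c6 by blast
lemma unit_r: "l \<in> pg_mor L \<Longrightarrow> pg_comp L l (pg_s L l) = l"
  using c6 by blast
lemma d_P: "l \<in> pg_mor L \<Longrightarrow> pg_d L l \<in> P"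
  using c7 by blast
lemma d_c: "l \<in> pg_mor L \<Longrightarrow> pg_d L l \<in> carrier Q"
  using d_P Pc by blast
lemma d_comp: "l \<in> pg_mor L \<Longrightarrow> m \<in> pg_mor L \<Longrightarrow> pg_s L l = pg_r L m \<Longrightarrow>
   pg_d L (pg_comp L l m) = pg_d L l \<otimes>\<^bsub>Q\<^esub> pg_d L m"
  using c9 by blast

lemma uf:
  assumes "a \<in> pg_mor L" "b \<in> pg_mor L" "pg_s L a = pg_r L b"
    "c \<in> pg_mor L" "e \<in> pg_mor L" "pg_s L c = pg_r L e"
    "pg_comp L a b = pg_comp L c e" "pg_d L a = pg_d L c"
  shows "a = c \<and> b = e"
proof -
  have dl: "pg_d L (pg_comp L a b) = pg_d L a \<otimes>\<^bsub>Q\<^esub> pg_d L b"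
    using d_comp assms by blast
  have "pg_d L (pg_comp L c e) = pg_d L c \<otimes>\<^bsub>Q\<^esub> pg_d L e"
    using d_comp assms by blast
  hence "pg_d L a \<otimes>\<^bsub>Q\<^esub> pg_d L b = pg_d L a \<otimes>\<^bsub>Q\<^esub> pg_d L e"
    using dl assms by simp
  hence db: "pg_d L b = pg_d L e"
    using monoid.Units_l_cancel[OF group.is_monoid[OF grp]] group.Units_eq[OF grp] d_c assms by metis
  have lm: "pg_comp L a b \<in> pg_mor L" using comp_mor assms by blast
  have ex: "\<exists>!(m, n). m \<in> pg_mor L \<and> n \<in> pg_mor L \<and> pg_s L m = pg_r L n \<and>
            pg_comp L m n = pg_comp L a b \<and> pg_d L m = pg_d L a \<and> pg_d L n = pg_d L b"
    using c10[rule_format, OF lm d_P[OF assms(1)] d_P[OF assms(2)] dl] .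
  then obtain w where "\<And>y. (case y of (m, n) \<Rightarrow> m \<in> pg_mor L \<and> n \<in> pg_mor L \<and> pg_s L m = pg_r L n \<and>
            pg_comp L m n = pg_comp L a b \<and> pg_d L m = pg_d L a \<and> pg_d L n = pg_d L b) \<Longrightarrow> y = w"
    by (metis (no_types, lifting) ex1E)
  from this[of "(a,b)"] this[of "(c,e)"] show ?thesis using assms db by auto
qed

lemma cancel:
  assumes "m \<in> pg_mor L" "a \<in> pg_mor L" "b \<in> pg_mor L" "pg_s L m = pg_r L a" "pg_s L m = pg_r L b"
    "pg_comp L m a = pg_comp L m b"
  shows "a = b"
  using uf[OF assms(1,2,4,1,3,5,6)] by simp

lemma pprec_iff: "pprec L m l \<longleftrightarrow> m \<in> pg_mor L \<and> (\<exists>k\<in>pg_mor L. pg_s L m = pg_r L k \<and> l = pg_comp L m k)"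
  unfolding pprec_def ext_set_def by blast

lemma pprec_refl: "m \<in> pg_mor L \<Longrightarrow> pprec L m m"
  unfolding pprec_iff using unit_r s_obj obj_mor obj_r by metis

lemma pprec_r: "pprec L m l \<Longrightarrow> pg_r L l = pg_r L m \<and> l \<in> pg_mor L"
  unfolding pprec_iff using comp_r comp_mor by blast

lemma pprec_rl: "l \<in> pg_mor L \<Longrightarrow> pprec L (pg_r L l) l"
  unfolding pprec_iff using unit_l r_obj obj_mor obj_s by metis

lemma filter_rin: "is_filter L x \<Longrightarrow> l \<in> x \<Longrightarrow> pg_r L l \<in> x"
  unfolding is_filter_def using pprec_rl by blast

lemma filter_same_r: "is_filter L x \<Longrightarrow> a \<in> x \<Longrightarrow> b \<in> x \<Longrightarrow> pg_r L a = pg_r L b"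
  unfolding is_filter_def using pprec_r by metis

lemma filter_r_eq: assumes "is_filter L x" "l \<in> x" shows "filter_r L x = pg_r L l"
proof -
  have m: "l \<in> pg_mor L" using assms unfolding is_filter_def by blast
  show ?thesis unfolding filter_r_def
  proof (rule the_equality)
    show "pg_r L l \<in> x \<inter> pg_obj L" using filter_rin[OF assms] r_obj m by blast
    fix v assume "v \<in> x \<inter> pg_obj L"
    then show "v = pg_r L l" using obj_r filter_same_r[OF assms(1) _ assms(2)] by force
  qed
qed

lemma filter_r_in: assumes "is_filter L x" shows "filter_r L x \<in> x"
proof -
  obtain l where "l \<in> x" using assms unfolding is_filter_def by blast
  then show ?thesis using filter_r_eq filter_rin assms by metis
qed

lemma filter_dinj: assumes "is_filter L x" "a \<in> x" "b \<in> x" "pg_d L a = pg_d L b" shows "a = b"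
proof -
  obtain n where n: "pprec L a n" "pprec L b n" using assms unfolding is_filter_def by blast
  then obtain k1 k2 where "k1 \<in> pg_mor L" "pg_s L a = pg_r L k1" "n = pg_comp L a k1"
     "k2 \<in> pg_mor L" "pg_s L b = pg_r L k2" "n = pg_comp L b k2" "a \<in> pg_mor L" "b \<in> pg_mor L"
    unfolding pprec_iff by blast
  then show ?thesis using uf assms(4) by metis
qed

lemma seg_eq: assumes "is_filter L x" "l \<in> x" shows "seg L x (pg_d L l) = l"
  unfolding seg_def using filter_dinj[OF assms(1)] assms(2) by (intro the_equality) auto

end
context pgl begin

lemma ext_iff: "l \<in> pg_mor L \<Longrightarrow> t \<in> ext_set L l \<longleftrightarrow> pprec L l t"
  by (simp add: pprec_def)

lemma pprec_mor: "pprec L a b \<Longrightarrow> a \<in> pg_mor L \<and> b \<in> pg_mor L"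
  using pprec_r[of a b] by (simp add: pprec_def)

lemma pprec_comp: "m \<in> pg_mor L \<Longrightarrow> a \<in> pg_mor L \<Longrightarrow> pg_s L m = pg_r L a \<Longrightarrow> pprec L m (pg_comp L m a)"
  unfolding pprec_iff by blast

lemma pprec_trans: assumes "pprec L a b" "pprec L b c" shows "pprec L a c"
proof -
  obtain k where k: "k \<in> pg_mor L" "pg_s L a = pg_r L k" "b = pg_comp L a k" "a \<in> pg_mor L"
    using assms(1) unfolding pprec_iff by blast
  obtain j where j: "j \<in> pg_mor L" "pg_s L b = pg_r L j" "c = pg_comp L b j"
    using assms(2) unfolding pprec_iff by blast
  have sb: "pg_s L k = pg_r L j" using comp_s[OF k(4,1,2)] j(2) k(3) by simp
  have "c = pg_comp L a (pg_comp L k j)" using assoc[OF k(4,1) j(1) k(2) sb] j(3) k(3) by simp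
  moreover have "pg_comp L k j \<in> pg_mor L" "pg_r L (pg_comp L k j) = pg_r L k"
    using comp_mor[OF k(1) j(1) sb] comp_r[OF k(1) j(1) sb] by auto
  ultimately show ?thesis unfolding pprec_iff using k(2,4) by metis
qed

lemma pprec_lmul: assumes "u \<in> pg_mor L" "pg_s L u = pg_r L a" "pprec L a b"
  shows "pprec L (pg_comp L u a) (pg_comp L u b)"
proof -
  obtain k where k: "k \<in> pg_mor L" "pg_s L a = pg_r L k" "b = pg_comp L a k" "a \<in> pg_mor L"
    using assms(3) unfolding pprec_iff by blast
  have "pg_comp L u b = pg_comp L (pg_comp L u a) k" using assoc[OF assms(1) k(4,1) assms(2) k(2)] k(3) by simp
  moreover have "pg_comp L u a \<in> pg_mor L" "pg_s L (pg_comp L u a) = pg_s L a"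
    using comp_mor[OF assms(1) k(4) assms(2)] comp_s[OF assms(1) k(4) assms(2)] by auto
  ultimately show ?thesis unfolding pprec_iff using k(1,2) by metis
qed

lemma pprec_lcancel: assumes "u \<in> pg_mor L" "a \<in> pg_mor L" "b \<in> pg_mor L"
  "pg_s L u = pg_r L a" "pg_s L u = pg_r L b" "pprec L (pg_comp L u a) (pg_comp L u b)"
  shows "pprec L a b"
proof -
  obtain k where k: "k \<in> pg_mor L" "pg_s L (pg_comp L u a) = pg_r L k"
     "pg_comp L u b = pg_comp L (pg_comp L u a) k"
    using assms(6) unfolding pprec_iff by blast
  have sk: "pg_s L a = pg_r L k" using k(2) comp_s[OF assms(1,2,4)] by simp
  have "pg_comp L u b = pg_comp L u (pg_comp L a k)" using assoc[OF assms(1,2) k(1) assms(4) sk] k(3) by simp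
  moreover have akm: "pg_comp L a k \<in> pg_mor L" and "pg_r L (pg_comp L a k) = pg_r L a"
    using comp_mor[OF assms(2) k(1) sk] comp_r[OF assms(2) k(1) sk] by auto
  ultimately have "b = pg_comp L a k" using cancel[OF assms(1) assms(3) akm] assms(5,4) by simp
  then show ?thesis unfolding pprec_iff using k(1) sk assms(2) by blast
qed

lemma FA_up: assumes "l \<in> FA L" "pprec L l l'" shows "l' \<in> FA L"
proof -
  have m: "l \<in> pg_mor L" "l' \<in> pg_mor L" using pprec_mor assms by auto
  have sub: "ext_set L l' \<subseteq> ext_set L l"
  proof
    fix t assume "t \<in> ext_set L l'"
    hence "pprec L l' t" using ext_iff[OF m(2)] by simp
    hence "pprec L l t" using pprec_trans[OF assms(2)] by simp
    then show "t \<in> ext_set L l" using ext_iff[OF m(1)] by simp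
  qed
  have "\<forall>a\<in>ext_set L l. \<forall>n\<in>pg_mor L.
      \<exists>J. finite J \<and> J \<subseteq> pg_mor L \<and> ext_set L a \<inter> ext_set L n = (\<Union>k\<in>J. ext_set L k)"
    using assms(1) unfolding FA_def by simp
  hence "\<forall>a\<in>ext_set L l'. \<forall>n\<in>pg_mor L.
      \<exists>J. finite J \<and> J \<subseteq> pg_mor L \<and> ext_set L a \<inter> ext_set L n = (\<Union>k\<in>J. ext_set L k)"
    using sub by (meson subsetD)
  then show ?thesis using m(2) unfolding FA_def by simp
qed

lemma FA_D: assumes "l \<in> FA L" "a \<in> ext_set L l" "n \<in> pg_mor L"
  shows "\<exists>J. finite J \<and> J \<subseteq> pg_mor L \<and> ext_set L a \<inter> ext_set L n = (\<Union>k\<in>J. ext_set L k)"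
  using assms unfolding FA_def by simp

lemma FA_cancel: assumes u: "u \<in> pg_mor L" and kp: "kp \<in> pg_mor L" and suk: "pg_s L u = pg_r L kp"
  and fa: "pg_comp L u kp \<in> FA L"
  shows "kp \<in> FA L"
  unfolding FA_def
proof (intro CollectI conjI ballI kp)
  fix a b assume a: "a \<in> ext_set L kp" and b: "b \<in> pg_mor L"
  have pa: "pprec L kp a" using a ext_iff[OF kp] by simp
  have am: "a \<in> pg_mor L" and ra: "pg_r L a = pg_s L u" using pprec_r[OF pa] suk by auto
  show "\<exists>J. finite J \<and> J \<subseteq> pg_mor L \<and> ext_set L a \<inter> ext_set L b = (\<Union>k\<in>J. ext_set L k)"
  proof (cases "pg_r L b = pg_r L a")
    case False
    have "ext_set L a \<inter> ext_set L b = {}"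
    proof (rule ccontr)
      assume "ext_set L a \<inter> ext_set L b \<noteq> {}"
      then obtain t where "t \<in> ext_set L a" "t \<in> ext_set L b" by blast
      hence pp: "pprec L a t" "pprec L b t" using ext_iff[OF am] ext_iff[OF b] by auto
      have "pg_r L t = pg_r L a" "pg_r L t = pg_r L b" using pprec_r[OF pp(1)] pprec_r[OF pp(2)] by simp_all
      then show False using False by simp
    qed
    then show ?thesis by (intro exI[of _ "{}"]) auto
  next
    case True
    have ukm: "pg_comp L u kp \<in> pg_mor L" using comp_mor[OF u kp suk] .
    have "pprec L (pg_comp L u kp) (pg_comp L u a)" using pprec_lmul[OF u suk pa] .
    hence ua: "pg_comp L u a \<in> ext_set L (pg_comp L u kp)"
      using ext_iff[OF ukm] by simp
    have ubm: "pg_comp L u b \<in> pg_mor L" using comp_mor[OF u b] True ra by simp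
    obtain J0 where J0: "finite J0" "J0 \<subseteq> pg_mor L"
      "ext_set L (pg_comp L u a) \<inter> ext_set L (pg_comp L u b) = (\<Union>k\<in>J0. ext_set L k)"
      using FA_D[OF fa ua ubm] by blast
    define J where "J = {k \<in> pg_mor L. pg_s L u = pg_r L k \<and> pg_comp L u k \<in> J0}"
    have inj: "inj_on (pg_comp L u) J"
    proof (rule inj_onI)
      fix x y assume "x \<in> J" "y \<in> J" "pg_comp L u x = pg_comp L u y"
      then show "x = y" unfolding J_def using cancel[OF u, of x y] by simp
    qed
    have "pg_comp L u ` J \<subseteq> J0" unfolding J_def by blast
    hence "finite (pg_comp L u ` J)" using J0(1) finite_subset by blast
    hence fJ: "finite J" using inj finite_imageD by blast
    have uam: "pg_comp L u a \<in> pg_mor L" using comp_mor[OF u am] ra by simp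
    have Jm: "J \<subseteq> pg_mor L" unfolding J_def by blast
    have "ext_set L a \<inter> ext_set L b = (\<Union>k\<in>J. ext_set L k)"
    proof (intro equalityI subsetI)
      fix t assume t: "t \<in> ext_set L a \<inter> ext_set L b"
      have pat: "pprec L a t" "pprec L b t" using t ext_iff[OF am] ext_iff[OF b] by auto
      have rt: "pg_r L t = pg_s L u" using pprec_r[OF pat(1)] ra by simp
      have tm: "t \<in> pg_mor L" using pprec_mor[OF pat(1)] by blast
      have "pprec L (pg_comp L u a) (pg_comp L u t)" using pprec_lmul[OF u _ pat(1)] ra by simp
      moreover have "pprec L (pg_comp L u b) (pg_comp L u t)" using pprec_lmul[OF u _ pat(2)] ra True by simp
      ultimately have "pg_comp L u t \<in> ext_set L (pg_comp L u a) \<inter> ext_set L (pg_comp L u b)"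
        using ext_iff[OF uam] ext_iff[OF ubm] by simp
      then obtain k where k: "k \<in> J0" "pg_comp L u t \<in> ext_set L k" using J0(3) by blast
      have km: "k \<in> pg_mor L" using k J0(2) by blast
      have "pprec L k k" using pprec_refl[OF km] .
      hence "k \<in> ext_set L k" using ext_iff[OF km] by simp
      hence "k \<in> ext_set L (pg_comp L u a)" using J0(3) k(1) by blast
      hence "pprec L (pg_comp L u a) k" using ext_iff[OF uam] by simp
      hence "pprec L u k" using pprec_trans[OF pprec_comp[OF u am ra[symmetric]]] by blast
      then obtain k' where k': "k' \<in> pg_mor L" "pg_s L u = pg_r L k'" "k = pg_comp L u k'"
        unfolding pprec_iff by blast
      have "k' \<in> J" unfolding J_def using k'(1,2) k(1) k'(3) by simp
      moreover have "pprec L (pg_comp L u k') (pg_comp L u t)" using k(2) k'(3) ext_iff[OF km] by simp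
      hence "pprec L k' t" using pprec_lcancel[OF u k'(1) tm k'(2)] rt by simp
      hence "t \<in> ext_set L k'" using ext_iff[OF k'(1)] by simp
      ultimately show "t \<in> (\<Union>k\<in>J. ext_set L k)" by blast
    next
      fix t assume "t \<in> (\<Union>k\<in>J. ext_set L k)"
      then obtain k' where k': "k' \<in> J" "t \<in> ext_set L k'" by blast
      have k'm: "k' \<in> pg_mor L" "pg_s L u = pg_r L k'" "pg_comp L u k' \<in> J0" using k'(1) unfolding J_def by simp_all
      have pkt: "pprec L k' t" using k'(2) ext_iff[OF k'm(1)] by simp
      have rt: "pg_r L t = pg_s L u" "t \<in> pg_mor L" using pprec_r[OF pkt] k'm(2) by auto
      have ukm': "pg_comp L u k' \<in> pg_mor L" using comp_mor[OF u k'm(1,2)] .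
      have "pprec L (pg_comp L u k') (pg_comp L u t)" using pprec_lmul[OF u k'm(2) pkt] .
      hence "pg_comp L u t \<in> ext_set L (pg_comp L u k')" using ext_iff[OF ukm'] by simp
      hence "pg_comp L u t \<in> (\<Union>k\<in>J0. ext_set L k)"
        using k'm(3) by blast
      hence "pg_comp L u t \<in> ext_set L (pg_comp L u a) \<inter> ext_set L (pg_comp L u b)"
        using J0(3) by simp
      hence "pprec L (pg_comp L u a) (pg_comp L u t)" "pprec L (pg_comp L u b) (pg_comp L u t)"
        using ext_iff[OF uam] ext_iff[OF ubm] by auto
      hence "pprec L a t" "pprec L b t"
        using pprec_lcancel[OF u am rt(2) ra[symmetric] rt(1)[symmetric]]
           pprec_lcancel[OF u b rt(2) _ rt(1)[symmetric]] ra True by simp_all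
      then show "t \<in> ext_set L a \<inter> ext_set L b" using ext_iff[OF am] ext_iff[OF b] by auto
    qed
    then show ?thesis using fJ Jm by blast
  qed
qed

end

context pgl begin

lemma filter_mor: "is_filter L x \<Longrightarrow> l \<in> x \<Longrightarrow> l \<in> pg_mor L"
  unfolding is_filter_def by blast

lemma filter_her: "is_filter L x \<Longrightarrow> l \<in> x \<Longrightarrow> pprec L m l \<Longrightarrow> m \<in> x"
  unfolding is_filter_def by blast

lemma filter_dir: "is_filter L x \<Longrightarrow> a \<in> x \<Longrightarrow> b \<in> x \<Longrightarrow> \<exists>n\<in>x. pprec L a n \<and> pprec L b n"
  unfolding is_filter_def by blast

lemma dir21:
  assumes x: "is_filter L x" and m: "m \<in> pg_mor L" and sm: "pg_s L m = filter_r L x"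
    and fm: "is_filter L (fmult L m x)"
  shows "m \<in> fmult L m x" "shift L (fmult L m x) (pg_d L m) = x"
proof -
  have fx: "filter_r L x \<in> x" using filter_r_in[OF x] .
  have "pg_comp L m (pg_s L m) = m" using unit_r[OF m] .
  hence "pprec L m (pg_comp L m (filter_r L x))" using pprec_refl[OF m] sm by simp
  then show mi: "m \<in> fmult L m x" unfolding fmult_def using m fx by blast
  have seg: "seg L (fmult L m x) (pg_d L m) = m" using seg_eq[OF fm mi] .
  show "shift L (fmult L m x) (pg_d L m) = x"
  proof (intro equalityI subsetI)
    fix t assume "t \<in> shift L (fmult L m x) (pg_d L m)"
    hence t: "t \<in> pg_mor L" "pg_s L m = pg_r L t" "pg_comp L m t \<in> fmult L m x"
      unfolding shift_def seg by auto
    then obtain g where g: "g \<in> x" "pprec L (pg_comp L m t) (pg_comp L m g)"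
      unfolding fmult_def by blast
    have gm: "g \<in> pg_mor L" using filter_mor[OF x g(1)] .
    have rg: "pg_r L g = pg_s L m" using filter_r_eq[OF x g(1)] sm by simp
    have "pprec L t g" using pprec_lcancel[OF m t(1) gm t(2) rg[symmetric] g(2)] .
    then show "t \<in> x" using filter_her[OF x g(1)] by blast
  next
    fix t assume tx: "t \<in> x"
    have tm: "t \<in> pg_mor L" using filter_mor[OF x tx] .
    have rt: "pg_s L m = pg_r L t" using filter_r_eq[OF x tx] sm by simp
    have cm: "pg_comp L m t \<in> pg_mor L" using comp_mor[OF m tm rt] .
    have "pg_comp L m t \<in> fmult L m x" unfolding fmult_def using cm tx pprec_refl[OF cm] by blast
    then show "t \<in> shift L (fmult L m x) (pg_d L m)"
      unfolding shift_def seg using tm rt by blast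
  qed
qed

lemma dir12:
  assumes x: "is_filter L x" and u: "u \<in> x"
  defines "z \<equiv> shift L x (pg_d L u)"
  shows "is_filter L z" "pg_s L u = filter_r L z" "fmult L u z = x"
    "x \<inter> FA L \<noteq> {} \<Longrightarrow> z \<inter> FA L \<noteq> {}"
proof -
  have um: "u \<in> pg_mor L" using filter_mor[OF x u] .
  have zd: "z = {t \<in> pg_mor L. pg_s L u = pg_r L t \<and> pg_comp L u t \<in> x}"
    unfolding z_def shift_def seg_eq[OF x u] ..
  have szm: "pg_s L u \<in> pg_mor L" using obj_mor[OF s_obj[OF um]] .
  have rsu: "pg_r L (pg_s L u) = pg_s L u" using obj_r[OF s_obj[OF um]] .
  have sz: "pg_s L u \<in> z" unfolding zd using szm rsu unit_r[OF um] u by simp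
  have above: "\<exists>r'\<in>z. r = pg_comp L u r'" if rr: "r \<in> x" "pprec L u r" for r
  proof -
    obtain r' where r': "r' \<in> pg_mor L" "pg_s L u = pg_r L r'" "r = pg_comp L u r'"
      using rr(2) unfolding pprec_iff by blast
    then show ?thesis unfolding zd using rr(1) by blast
  qed
  show fz: "is_filter L z"
    unfolding is_filter_def
  proof (intro conjI ballI allI impI)
    show "z \<subseteq> pg_mor L" unfolding zd by blast
    show "z \<noteq> {}" using sz by blast
  next
    fix l a assume l: "l \<in> z" and al: "pprec L a l"
    have lz: "l \<in> pg_mor L" "pg_s L u = pg_r L l" "pg_comp L u l \<in> x" using l unfolding zd by auto
    have ra: "pg_r L l = pg_r L a" "a \<in> pg_mor L" using pprec_r[OF al] pprec_mor[OF al] by auto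
    have "pprec L (pg_comp L u a) (pg_comp L u l)" using pprec_lmul[OF um _ al] lz(2) ra by simp
    hence "pg_comp L u a \<in> x" using filter_her[OF x lz(3)] by blast
    then show "a \<in> z" unfolding zd using ra lz(2) by simp
  next
    fix a b assume a: "a \<in> z" and b: "b \<in> z"
    have az: "a \<in> pg_mor L" "pg_s L u = pg_r L a" "pg_comp L u a \<in> x" using a unfolding zd by auto
    have bz: "b \<in> pg_mor L" "pg_s L u = pg_r L b" "pg_comp L u b \<in> x" using b unfolding zd by auto
    obtain r where r: "r \<in> x" "pprec L (pg_comp L u a) r" "pprec L (pg_comp L u b) r"
      using filter_dir[OF x az(3) bz(3)] by blast
    have "pprec L u r" using pprec_trans[OF pprec_comp[OF um az(1,2)] r(2)] .
    then obtain r' where r': "r' \<in> z" "r = pg_comp L u r'" using above r(1) by blast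
    have r'm: "r' \<in> pg_mor L" "pg_s L u = pg_r L r'" using r'(1) unfolding zd by auto
    have "pprec L a r'" using pprec_lcancel[OF um az(1) r'm(1) az(2) r'm(2)] r(2) r'(2) by simp
    moreover have "pprec L b r'" using pprec_lcancel[OF um bz(1) r'm(1) bz(2) r'm(2)] r(3) r'(2) by simp
    ultimately show "\<exists>n\<in>z. pprec L a n \<and> pprec L b n" using r'(1) by blast
  qed
  show "pg_s L u = filter_r L z" using filter_r_eq[OF fz sz] rsu by simp
  show "fmult L u z = x"
  proof (intro equalityI subsetI)
    fix t assume "t \<in> fmult L u z"
    then obtain g where g: "g \<in> z" "pprec L t (pg_comp L u g)" unfolding fmult_def by blast
    have "pg_comp L u g \<in> x" using g(1) unfolding zd by blast
    then show "t \<in> x" using filter_her[OF x _ g(2)] by blast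
  next
    fix t assume tx: "t \<in> x"
    obtain r where r: "r \<in> x" "pprec L t r" "pprec L u r" using filter_dir[OF x tx u] by blast
    obtain r' where r': "r' \<in> z" "r = pg_comp L u r'" using above[OF r(1) r(3)] by blast
    show "t \<in> fmult L u z" unfolding fmult_def using filter_mor[OF x tx] r' r(2) by blast
  qed
  assume "x \<inter> FA L \<noteq> {}"
  then obtain a where a: "a \<in> x" "a \<in> FA L" by blast
  obtain r where r: "r \<in> x" "pprec L a r" "pprec L u r" using filter_dir[OF x a(1) u] by blast
  have rf: "r \<in> FA L" using FA_up[OF a(2) r(2)] .
  obtain r' where r': "r' \<in> z" "r = pg_comp L u r'" using above[OF r(1) r(3)] by blast
  have r'm: "r' \<in> pg_mor L" "pg_s L u = pg_r L r'" using r'(1) unfolding zd by auto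
  have "r' \<in> FA L" using FA_cancel[OF um r'm] rf r'(2) by simp
  then show "z \<inter> FA L \<noteq> {}" using r'(1) by blast
qed

end

theorem proposition5p21:
  fixes Q :: "('q, 'b) monoid_scheme" and P :: "'q set" and L :: "('m, 'q) pgraph"
    and g :: "'m set \<times> 'q \<times> 'm set"
  assumes "wqlo Q P"
    and "is_pgraph Q P L"
    and "FA L \<noteq> {}"
    and "g \<in> path_space L \<times> carrier Q \<times> path_space L"
  shows "g \<in> path_groupoid Q P L \<longleftrightarrow>
    (\<exists>x\<in>path_space L. \<exists>m\<in>pg_mor L. \<exists>n\<in>pg_mor L.
       pg_s L m = filter_r L x \<and> pg_s L n = filter_r L x \<and>
       g = (fmult L m x, pg_d L m \<otimes>\<^bsub>Q\<^esub> inv\<^bsub>Q\<^esub> pg_d L n, fmult L n x))"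
proof -
  interpret pgl Q P L
    by (rule pgl.intro) (use assms(1,2) in \<open>auto simp: wqlo_def\<close>)
  show ?thesis
  proof
    assume "g \<in> path_groupoid Q P L"
    then obtain x q y where g: "g = (x, q, y)" "x \<in> path_space L" "y \<in> path_space L"
      and ex: "\<exists>m\<in>P. \<exists>n\<in>P. q = m \<otimes>\<^bsub>Q\<^esub> inv\<^bsub>Q\<^esub> n \<and> in_dom L x m \<and> in_dom L y n \<and>
        shift L x m = shift L y n"
      unfolding path_groupoid_def by blast
    then obtain m n where mn: "q = m \<otimes>\<^bsub>Q\<^esub> inv\<^bsub>Q\<^esub> n" "in_dom L x m" "in_dom L y n"
      "shift L x m = shift L y n" by blast
    obtain u where u: "u \<in> x" "pg_d L u = m" using mn(2) unfolding in_dom_def by blast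
    obtain v where v: "v \<in> y" "pg_d L v = n" using mn(3) unfolding in_dom_def by blast
    have fx: "is_filter L x" "x \<inter> FA L \<noteq> {}" using g(2) unfolding path_space_def by auto
    have fy: "is_filter L y" "y \<inter> FA L \<noteq> {}" using g(3) unfolding path_space_def by auto
    define z where "z = shift L x m"
    have zx: "z = shift L x (pg_d L u)" using z_def u(2) by simp
    have zy: "z = shift L y (pg_d L v)" using z_def mn(4) v(2) by simp
    note X = dir12[OF fx(1) u(1), folded zx]
    note Y = dir12[OF fy(1) v(1), folded zy]
    have zp: "z \<in> path_space L" unfolding path_space_def using X(1) X(4)[OF fx(2)] by blast
    show "\<exists>x\<in>path_space L. \<exists>m\<in>pg_mor L. \<exists>n\<in>pg_mor L.
       pg_s L m = filter_r L x \<and> pg_s L n = filter_r L x \<and>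
       g = (fmult L m x, pg_d L m \<otimes>\<^bsub>Q\<^esub> inv\<^bsub>Q\<^esub> pg_d L n, fmult L n x)"
      using zp filter_mor[OF fx(1) u(1)] filter_mor[OF fy(1) v(1)] X(2,3) Y(2,3) g(1) mn(1) u(2) v(2)
      by blast
  next
    assume "\<exists>x\<in>path_space L. \<exists>m\<in>pg_mor L. \<exists>n\<in>pg_mor L.
       pg_s L m = filter_r L x \<and> pg_s L n = filter_r L x \<and>
       g = (fmult L m x, pg_d L m \<otimes>\<^bsub>Q\<^esub> inv\<^bsub>Q\<^esub> pg_d L n, fmult L n x)"
    then obtain x m n where x: "x \<in> path_space L" and m: "m \<in> pg_mor L" and n: "n \<in> pg_mor L"
      and sm: "pg_s L m = filter_r L x" and sn: "pg_s L n = filter_r L x"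
      and g: "g = (fmult L m x, pg_d L m \<otimes>\<^bsub>Q\<^esub> inv\<^bsub>Q\<^esub> pg_d L n, fmult L n x)" by blast
    have fx: "is_filter L x" using x unfolding path_space_def by blast
    have pm: "fmult L m x \<in> path_space L" and pn: "fmult L n x \<in> path_space L"
      using assms(4) g by auto
    have fm: "is_filter L (fmult L m x)" using pm unfolding path_space_def by blast
    have fn: "is_filter L (fmult L n x)" using pn unfolding path_space_def by blast
    note M = dir21[OF fx m sm fm] and N = dir21[OF fx n sn fn]
    have "in_dom L (fmult L m x) (pg_d L m)" "in_dom L (fmult L n x) (pg_d L n)"
      unfolding in_dom_def using M(1) N(1) by blast+
    then show "g \<in> path_groupoid Q P L"
      unfolding path_groupoid_def using pm pn d_P[OF m] d_P[OF n] M(2) N(2) g by blast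
  qed
qed

end
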